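(* Let $p$ be an odd prime, $x\in\mathbb Z_p$ and $x\not\equiv0\pmod p$. Then $$\sum_{k=0}^{\frac{p-1}2}\binom{2k}k^2\Big(\frac x4\Big)^{2k}\equiv\Big(\frac{-x}p\Big)P_{\frac{p-1}2}\Big(\frac{x+x^{-1}}2\Big)\pmod p.$$
   Context: $\mathbb Z_p$ denotes the set of rational numbers whose denominator (in lowest terms) is prime to $p$; congruences are in this ring. For $a\in\mathbb Z_p$, $\big(\frac ap\big)$ is the Legendre symbol of the residue of $a$ modulo $p$. $P_n(x)$ is the $n$-th Legendre polynomial, defined by $\frac1{\sqrt{1-2xt+t^2}}=\sum_{n\ge0}P_n(x)t^n$, equivalently $P_n(x)=\frac1{2^n}\sum_{k=0}^{[n/2]}\frac{(-1)^k(2n-2k)!}{k!(n-k)!(n-2k)!}x^{n-2k}$. *)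

theory Defs
  imports "HOL-Number_Theory.Number_Theory"
begin

definition in_Zp :: "int \<Rightarrow> rat \<Rightarrow> bool" where
  "in_Zp p a \<longleftrightarrow> coprime (snd (quotient_of a)) p"

definition qcong :: "rat \<Rightarrow> rat \<Rightarrow> int \<Rightarrow> bool" where
  "qcong a b p \<longleftrightarrow> in_Zp p a \<and> in_Zp p b \<and> p dvd fst (quotient_of (a - b))"

definition qres :: "int \<Rightarrow> rat \<Rightarrow> int" where
  "qres p a = (THE r. 0 \<le> r \<and> r < p \<and> [fst (quotient_of a) = r * snd (quotient_of a)] (mod p))"

definition qLegendre :: "rat \<Rightarrow> int \<Rightarrow> int" where
  "qLegendre a p = Legendre (qres p a) p"

definition legendreP :: "nat \<Rightarrow> rat \<Rightarrow> rat" where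
  "legendreP n x = (1 / 2 ^ n) * (\<Sum>k = 0..n div 2.
      of_int ((-1) ^ k) * of_nat (fact (2*n - 2*k)) /
      of_nat (fact k * fact (n - k) * fact (n - 2*k)) * x ^ (n - 2*k))"

end

theory Submission
  imports Defs "HOL-Computational_Algebra.Polynomial"
begin



definition Rr :: "int \<Rightarrow> rat \<Rightarrow> int \<Rightarrow> bool" where
  "Rr p r a \<longleftrightarrow> (\<exists>u v. r = of_int u / of_int v \<and> \<not> p dvd v \<and> [u = a*v] (mod p))"

context fixes p :: int assumes pp: "prime p"
begin

lemma Rr_int: "Rr p (of_int k) k"
  unfolding Rr_def using pp by (intro exI[of _ k] exI[of _ 1]) (auto simp: not_prime_unit)

lemma cop: "\<not> p dvd d \<Longrightarrow> coprime d p"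
  using pp prime_imp_coprime coprime_commute by blast

lemma ndvd_mult: "\<not> p dvd a \<Longrightarrow> \<not> p dvd b \<Longrightarrow> \<not> p dvd (a*b)"
  using pp by (simp add: prime_dvd_mult_iff)

lemma Rr_add: assumes "Rr p r a" "Rr p s b" shows "Rr p (r+s) (a+b)"
proof -
  obtain u v where 1: "r = of_int u / of_int v" "\<not> p dvd v" "[u = a*v] (mod p)" using assms(1) Rr_def by auto
  obtain u' v' where 2: "s = of_int u' / of_int v'" "\<not> p dvd v'" "[u' = b*v'] (mod p)" using assms(2) Rr_def by auto
  have v0: "v \<noteq> 0" "v' \<noteq> 0" using 1 2 by auto
  have "r + s = of_int (u*v' + u'*v) / of_int (v*v')" using 1 2 v0 by (simp add: field_simps)
  moreover have "\<not> p dvd (v*v')" using 1 2 ndvd_mult by auto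
  moreover have "[u*v' + u'*v = (a+b)*(v*v')] (mod p)"
  proof -
    have "[u*v' + u'*v = (a*v)*v' + (b*v')*v] (mod p)" using 1 2 by (intro cong_add cong_mult) auto
    thus ?thesis by (simp add: algebra_simps)
  qed
  ultimately show ?thesis unfolding Rr_def by blast
qed

lemma Rr_mult: assumes "Rr p r a" "Rr p s b" shows "Rr p (r*s) (a*b)"
proof -
  obtain u v where 1: "r = of_int u / of_int v" "\<not> p dvd v" "[u = a*v] (mod p)" using assms(1) Rr_def by auto
  obtain u' v' where 2: "s = of_int u' / of_int v'" "\<not> p dvd v'" "[u' = b*v'] (mod p)" using assms(2) Rr_def by auto
  have "r * s = of_int (u*u') / of_int (v*v')" using 1 2 by (simp add: field_simps)
  moreover have "\<not> p dvd (v*v')" using 1 2 ndvd_mult by auto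
  moreover have "[u*u' = (a*b)*(v*v')] (mod p)"
  proof -
    have "[u*u' = (a*v)*(b*v')] (mod p)" using 1 2 by (intro cong_mult) auto
    thus ?thesis by (simp add: algebra_simps)
  qed
  ultimately show ?thesis unfolding Rr_def by blast
qed

lemma Rr_uminus: assumes "Rr p r a" shows "Rr p (-r) (-a)"
  using Rr_mult[OF Rr_int[of "-1"] assms] by simp

lemma Rr_diff: assumes "Rr p r a" "Rr p s b" shows "Rr p (r-s) (a-b)"
  using Rr_add[OF assms(1) Rr_uminus[OF assms(2)]] by simp

lemma Rr_cong: assumes "Rr p r a" "[a = b] (mod p)" shows "Rr p r b"
proof -
  obtain u v where 1: "r = of_int u / of_int v" "\<not> p dvd v" "[u = a*v] (mod p)" using assms(1) Rr_def by auto
  have "[u = b*v] (mod p)" using 1(3) cong_mult[OF assms(2) cong_refl[of v]] cong_trans by blast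
  thus ?thesis using 1 Rr_def by blast
qed

lemma Rr_inverse: assumes "Rr p r a" "[a*b = 1] (mod p)" shows "Rr p (inverse r) b"
proof -
  obtain u v where 1: "r = of_int u / of_int v" "\<not> p dvd v" "[u = a*v] (mod p)" using assms(1) Rr_def by auto
  have "\<not> p dvd a"
  proof
    assume "p dvd a" hence "p dvd a*b" by simp
    hence "p dvd 1" using assms(2) cong_dvd_iff by blast
    thus False using pp by (simp add: not_prime_unit)
  qed
  hence "\<not> p dvd (a*v)" using 1 ndvd_mult by auto
  hence nu: "\<not> p dvd u" using 1(3) cong_dvd_iff by blast
  have "inverse r = of_int v / of_int u" using 1 by simp
  moreover have "[v = b*u] (mod p)"
  proof -
    have "[b*u = b*(a*v)] (mod p)" using 1(3) by (intro cong_mult) auto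
    moreover have "[(a*b)*v = 1*v] (mod p)" using assms(2) by (rule cong_scalar_right)
    moreover have "b*(a*v) = (a*b)*v" by simp
    ultimately show ?thesis using cong_sym cong_trans by (metis mult_1)
  qed
  ultimately show ?thesis using nu Rr_def by blast
qed

lemma Rr_pow: assumes "Rr p r a" shows "Rr p (r^k) (a^k)"
proof (induction k)
  case 0 then show ?case using Rr_int[of 1] by simp
next
  case (Suc k) then show ?case using Rr_mult[OF assms Suc.IH] by simp
qed

lemma Rr_sum: assumes "\<And>i. i \<in> A \<Longrightarrow> Rr p (f i) (g i)" shows "Rr p (\<Sum>i\<in>A. f i) (\<Sum>i\<in>A. g i)"
  using assms
proof (induction A rule: infinite_finite_induct)
  case (infinite A) then show ?case using Rr_int[of 0] by simp
next
  case empty then show ?case using Rr_int[of 0] by simp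
next
  case (insert x F) then show ?case by (simp add: Rr_add)
qed

lemma Rr_nat: "Rr p (of_nat k) (int k)"
  using Rr_int[of "int k"] by simp

lemma Rr_unique: assumes "Rr p r a" "Rr p r b" shows "[a = b] (mod p)"
proof -
  obtain u v where 1: "r = of_int u / of_int v" "\<not> p dvd v" "[u = a*v] (mod p)" using assms(1) Rr_def by auto
  obtain u' v' where 2: "r = of_int u' / of_int v'" "\<not> p dvd v'" "[u' = b*v'] (mod p)" using assms(2) Rr_def by auto
  have v0: "v \<noteq> 0" "v' \<noteq> 0" using 1 2 by auto
  have "of_int u / of_int v = (of_int u' / of_int v' :: rat)" using 1 2 by simp
  hence "rat_of_int (u*v') = of_int (u'*v)" using v0 by (simp add: field_simps)
  hence e: "u*v' = u'*v" by (simp only: of_int_eq_iff)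
  have "[u*v' = (a*v)*v'] (mod p)" using 1(3) by (rule cong_scalar_right)
  hence "[a*(v*v') = u*v'] (mod p)" by (simp add: cong_sym_eq mult.assoc)
  moreover have "[u'*v = (b*v')*v] (mod p)" using 2(3) by (rule cong_scalar_right)
  hence "[u'*v = b*(v*v')] (mod p)" by (simp add: ac_simps)
  ultimately have "[a*(v*v') = b*(v*v')] (mod p)" using e cong_trans by simp
  moreover have "coprime (v*v') p" using ndvd_mult[OF 1(2) 2(2)] cop by blast
  ultimately show ?thesis using cong_mult_rcancel by blast
qed

lemma Rr_quot: assumes "Rr p r a" "quotient_of r = (n, d)" shows "[n = a*d] (mod p)" "\<not> p dvd d"
proof -
  obtain u v where 1: "r = of_int u / of_int v" "\<not> p dvd v" "[u = a*v] (mod p)" using assms(1) Rr_def by auto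
  have v0: "v \<noteq> 0" using 1 by auto
  have d0: "d > 0" using assms(2) quotient_of_denom_pos by blast
  have "of_int n / of_int d = (of_int u / of_int v :: rat)" using 1 quotient_of_div[OF assms(2)] by simp
  hence "rat_of_int (n*v) = of_int (u*d)" using v0 d0 by (simp add: field_simps)
  hence e: "n*v = u*d" by (simp only: of_int_eq_iff)
  have "coprime n d" using quotient_of_coprime[OF assms(2)] .
  have "d dvd n*v" using e by simp
  hence "d dvd v" using \<open>coprime n d\<close> by (meson coprime_commute coprime_dvd_mult_right_iff)
  thus nd: "\<not> p dvd d" using 1(2) dvd_trans by blast
  have "[u*d = (a*v)*d] (mod p)" using 1(3) by (rule cong_scalar_right)
  hence "[n*v = (a*d)*v] (mod p)" using e by (simp add: ac_simps)
  moreover have "coprime v p" using 1(2) pp by (simp add: coprime_commute prime_imp_coprime)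
  ultimately show "[n = a*d] (mod p)" using cong_mult_rcancel by blast
qed

lemma Rr_in_Zp: assumes "Rr p r a" shows "in_Zp p r"
proof -
  obtain n d where q: "quotient_of r = (n, d)" by (cases "quotient_of r") auto
  have "\<not> p dvd d" using Rr_quot[OF assms q] by simp
  thus ?thesis using q cop unfolding in_Zp_def by simp
qed

lemma in_Zp_Rr: assumes "in_Zp p r" shows "\<exists>a. Rr p r a"
proof -
  obtain n d where q: "quotient_of r = (n, d)" by (cases "quotient_of r") auto
  have cd: "coprime d p" using assms q unfolding in_Zp_def by simp
  then obtain d' where d': "[d*d' = 1] (mod p)" using cong_solve_coprime_int by blast
  have "\<not> p dvd d"
  proof
    assume "p dvd d" hence "p dvd gcd d p" by simp
    thus False using cd pp by (simp add: not_prime_unit)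
  qed
  moreover have "[n = (n*d')*d] (mod p)"
  proof -
    have "[n*(d*d') = n*1] (mod p)" using d' by (intro cong_mult) auto
    thus ?thesis by (simp add: algebra_simps cong_sym)
  qed
  ultimately show ?thesis using quotient_of_div[OF q] unfolding Rr_def by blast
qed

lemma Rr_zero_num: assumes "Rr p r 0" shows "p dvd fst (quotient_of r)"
proof -
  obtain n d where q: "quotient_of r = (n, d)" by (cases "quotient_of r") auto
  show ?thesis using Rr_quot[OF assms q] q by (simp add: cong_0_iff)
qed

lemma qcong_intro: assumes "Rr p r a" "Rr p s b" "[a = b] (mod p)" shows "qcong r s p"
proof -
  have "Rr p (r - s) (a - b)" using Rr_diff assms by blast
  hence "Rr p (r - s) 0" using assms(3) Rr_cong by (simp add: cong_iff_dvd_diff cong_0_iff)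
  thus ?thesis unfolding qcong_def using Rr_in_Zp assms Rr_zero_num by blast
qed

lemma qres_Rr: assumes "Rr p r a" shows "qres p r = a mod p"
proof -
  obtain n d where q: "quotient_of r = (n, d)" by (cases "quotient_of r") auto
  note Q = Rr_quot[OF assms q]
  have p0: "p > 0" using pp prime_gt_0_int by blast
  have cd: "coprime d p" using Q(2) cop by blast
  show ?thesis unfolding qres_def q fst_conv snd_conv
  proof (rule the_equality)
    have "[a mod p * d = a * d] (mod p)" by (simp add: cong_def mod_mult_left_eq)
    hence "[n = a mod p * d] (mod p)" using Q(1) cong_sym cong_trans by blast
    thus "0 \<le> a mod p \<and> a mod p < p \<and> [n = a mod p * d] (mod p)"
      using p0 by simp
  next
    fix r' assume h: "0 \<le> r' \<and> r' < p \<and> [n = r' * d] (mod p)"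
    have "[a mod p * d = a * d] (mod p)" by (simp add: cong_def mod_mult_left_eq)
    hence "[r'*d = (a mod p)*d] (mod p)"
      using Q(1) h cong_sym cong_trans by blast
    hence "[r' = a mod p] (mod p)" using cd cong_mult_rcancel by blast
    thus "r' = a mod p" using h p0 cong_less_imp_eq_int by auto
  qed
qed

end



context fixes p :: int and n :: nat assumes pp: "prime p" and hn: "p = 2 * int n + 1"
begin

lemma n_pos: "n \<ge> 1"
  using prime_ge_2_int[OF pp] hn by linarith

lemma p_gt2: "p > 2" using n_pos hn by linarith

lemma euler: "[Legendre a p = a ^ n] (mod p)"
proof -
  have pn: "prime (nat p)" using pp by (simp add: prime_nat_iff_prime)
  have "2 < nat p" using p_gt2 by linarith
  note E = euler_criterion[OF pn this, of a]
  have "int (nat p) = p" using p_gt2 by simp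
  moreover have "(nat p - 1) div 2 = n" using hn by (simp add: nat_add_distrib nat_mult_distrib)
  ultimately show ?thesis using E by simp
qed

lemma Legendre_cong: assumes "[a = b] (mod p)" shows "Legendre a p = Legendre b p"
proof -
  have 1: "[a = c] (mod p) \<longleftrightarrow> [b = c] (mod p)" for c
    using assms cong_sym cong_trans by blast
  have 2: "[c = a] (mod p) \<longleftrightarrow> [c = b] (mod p)" for c
    using assms cong_sym cong_trans by blast
  show ?thesis unfolding Legendre_def QuadRes_def by (simp only: 1 2)
qed

lemma Legendre_vals: "Legendre a p \<in> {-1, 0, 1}"
  unfolding Legendre_def by auto

lemma small_cong_eq: assumes "x \<in> {-1,0,1::int}" "y \<in> {-1,0,1}" "[x = y] (mod p)" shows "x = y"
proof (rule ccontr)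
  assume ne: "x \<noteq> y"
  have "p dvd (x - y)" using assms(3) cong_iff_dvd_diff by blast
  hence "\<bar>p\<bar> \<le> \<bar>x - y\<bar>" using ne dvd_imp_le_int by simp
  moreover have "\<bar>x - y\<bar> \<le> 2" using assms(1,2) by auto
  ultimately show False using p_gt2 by simp
qed

lemma Legendre_mult: "Legendre (a*b) p = Legendre a p * Legendre b p"
proof (rule small_cong_eq)
  show "Legendre (a*b) p \<in> {-1,0,1}" by (rule Legendre_vals)
  show "Legendre a p * Legendre b p \<in> {-1,0,1}" using Legendre_vals[of a] Legendre_vals[of b] by auto
  have "[Legendre a p * Legendre b p = a^n * b^n] (mod p)" using euler by (intro cong_mult)
  moreover have "[Legendre (a*b) p = (a*b)^n] (mod p)" by (rule euler)
  hence "[Legendre (a*b) p = a^n * b^n] (mod p)" by (simp add: power_mult_distrib)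
  ultimately show "[Legendre (a*b) p = Legendre a p * Legendre b p] (mod p)"
    using cong_sym cong_trans by blast
qed

lemma Legendre_0_iff: "Legendre a p = 0 \<longleftrightarrow> p dvd a"
  unfolding Legendre_def by (simp add: cong_0_iff)

lemma Legendre_sq: assumes "\<not> p dvd a" shows "Legendre (a*a*b) p = Legendre b p"
proof -
  have "Legendre a p \<in> {-1, 1}" using Legendre_vals[of a] Legendre_0_iff[of a] assms by auto
  hence "Legendre a p * Legendre a p = 1" by auto
  thus ?thesis by (simp add: Legendre_mult)
qed

lemma Legendre_pow_n: "[a ^ n = Legendre a p] (mod p)"
  using euler cong_sym by blast

lemma reindex_affine:
  assumes l: "\<not> p dvd l"
  shows "(\<Sum>z\<in>{0..<p}. F z) = (\<Sum>z\<in>{0..<p}. F ((l*z+m) mod p))"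
proof -
  define h where "h = (\<lambda>z. (l*z+m) mod p)"
  have p0: "p > 0" using p_gt2 by simp
  have cl: "coprime l p" using l pp cop by blast
  have inj: "inj_on h {0..<p}"
  proof (rule inj_onI)
    fix z z' assume z: "z \<in> {0..<p}" "z' \<in> {0..<p}" and e: "h z = h z'"
    hence "[l*z+m = l*z'+m] (mod p)" unfolding h_def cong_def by simp
    hence "[l*z = l*z'] (mod p)" using cong_add_rcancel by blast
    hence "[z = z'] (mod p)" using cl cong_mult_lcancel by blast
    thus "z = z'" using z cong_less_imp_eq_int by auto
  qed
  have sub: "h ` {0..<p} \<subseteq> {0..<p}" unfolding h_def using p0 by auto
  have "card (h ` {0..<p}) = card {0..<p}" using card_image[OF inj] .
  hence "h ` {0..<p} = {0..<p}" using sub by (simp add: card_subset_eq)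
  hence "bij_betw h {0..<p} {0..<p}" using inj by (simp add: bij_betw_def)
  thus ?thesis unfolding h_def by (rule sum.reindex_bij_betw[symmetric])
qed

lemma sum_mod_cong: "[(\<Sum>z\<in>A. f z mod p) = (\<Sum>z\<in>A. f z)] (mod p)"
  by (simp add: cong_def mod_sum_eq)

lemma power_sum:
  assumes m: "m > 0"
  shows "[(\<Sum>z\<in>{0..<p}. z^m) = (if 2*n dvd m then -1 else 0)] (mod p)"
proof (cases "2*n dvd m")
  case True
  then obtain q where q: "m = 2*n*q" by blast
  have "{0..<p} = insert 0 {1..<p}" using p_gt2 by auto
  hence "(\<Sum>z\<in>{0..<p}. z^m) = (\<Sum>z\<in>{1..<p}. z^m)" using m by simp
  moreover have "[(\<Sum>z\<in>{1..<p}. z^m) = (\<Sum>z\<in>{1..<p}. 1)] (mod p)"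
  proof (rule cong_sum)
    fix z assume z: "z \<in> {1..<p}"
    hence nd: "\<not> p dvd z" using zdvd_not_zless by auto
    have "[z^n = Legendre z p] (mod p)" by (rule Legendre_pow_n)
    hence "[(z^n)^2 = (Legendre z p)^2] (mod p)" by (rule cong_pow)
    moreover have "(Legendre z p)^2 = 1" using Legendre_vals[of z] Legendre_0_iff[of z] nd by auto
    ultimately have "[z^(2*n) = 1] (mod p)" by (simp add: power_mult mult.commute)
    hence "[(z^(2*n))^q = 1^q] (mod p)" by (rule cong_pow)
    thus "[z^m = 1] (mod p)" by (simp add: q power_mult)
  qed
  moreover have "(\<Sum>z\<in>{1..<p}. (1::int)) = p - 1" using p_gt2 by simp
  moreover have "[p - 1 = -1] (mod p)" by (simp add: cong_iff_dvd_diff)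
  ultimately have "[(\<Sum>z\<in>{0..<p}. z^m) = -1] (mod p)" using cong_trans by simp
  thus ?thesis using True by simp
next
  case False
  have pn: "prime (nat p)" using pp by (simp add: prime_nat_iff_prime)
  obtain a where a: "a \<in> totatives (nat p)" "ord (nat p) a = nat p - 1"
    using residue_prime_has_primroot[OF pn] by blast
  have np: "nat p - 1 = 2*n" using hn by (simp add: nat_add_distrib nat_mult_distrib)
  define g where "g = int a"
  have "\<not> [a ^ m = 1] (mod nat p)" using False a(2) np ord_divides by auto
  hence ng: "\<not> [g ^ m = 1] (mod p)" unfolding g_def using cong_int_iff[of "a^m" 1 "nat p"] p_gt2 by simp
  have "coprime (nat p) a" using a(1) by (simp add: totatives_def coprime_commute)
  hence "coprime (int (nat p)) g" unfolding g_def by (simp only: coprime_int_iff)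
  hence cpg: "coprime p g" using p_gt2 by simp
  have gd: "\<not> p dvd g"
  proof
    assume "p dvd g" hence "p dvd gcd p g" by simp
    thus False using cpg pp by (simp add: not_prime_unit)
  qed
  define S where "S = (\<Sum>z\<in>{0..<p}. z^m)"
  have "(\<Sum>z\<in>{0..<p}. z^m mod p) = (\<Sum>z\<in>{0..<p}. ((g*z+0) mod p)^m mod p)"
    by (rule reindex_affine[OF gd])
  also have "\<dots> = (\<Sum>z\<in>{0..<p}. (g*z)^m mod p)" by (simp add: power_mod)
  finally have eq: "(\<Sum>z\<in>{0..<p}. z^m mod p) = (\<Sum>z\<in>{0..<p}. (g*z)^m mod p)" .
  have "[(\<Sum>z\<in>{0..<p}. z^m) = (\<Sum>z\<in>{0..<p}. z^m mod p)] (mod p)"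
    using sum_mod_cong[of "\<lambda>z. z^m" "{0..<p}"] cong_sym by blast
  hence "[(\<Sum>z\<in>{0..<p}. z^m) = (\<Sum>z\<in>{0..<p}. (g*z)^m mod p)] (mod p)" using eq by simp
  hence "[(\<Sum>z\<in>{0..<p}. z^m) = (\<Sum>z\<in>{0..<p}. (g*z)^m)] (mod p)"
    using sum_mod_cong[of "\<lambda>z. (g*z)^m" "{0..<p}"] cong_trans by blast
  moreover have "(\<Sum>z\<in>{0..<p}. (g*z)^m) = g^m * S" unfolding S_def
    by (simp add: power_mult_distrib sum_distrib_left)
  ultimately have "[S = g^m * S] (mod p)" unfolding S_def by simp
  hence "p dvd (S - g^m * S)" by (simp add: cong_iff_dvd_diff)
  hence "p dvd -(S - g^m * S)" by (simp only: dvd_minus_iff)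
  hence "p dvd (g^m - 1) * S" by (simp add: algebra_simps)
  moreover have "\<not> p dvd (g^m - 1)" using ng by (simp add: cong_iff_dvd_diff)
  ultimately have "p dvd S" using pp prime_dvd_mult_iff by blast
  thus ?thesis using False unfolding S_def by (simp add: cong_0_iff)
qed

end



context fixes p :: int and n :: nat assumes pp: "prime p" and hn: "p = 2 * int n + 1"
begin

lemma dvd_shift: assumes "i \<le> 2*n" "n \<ge> 1" shows "2*n dvd n+i \<longleftrightarrow> i = n"
proof
  assume "2*n dvd n+i"
  then obtain q where q: "n + i = 2*n*q" by blast
  show "i = n"
  proof (cases q)
    case 0 thus ?thesis using q assms by simp
  next
    case (Suc q') show ?thesis
    proof (cases q')
      case 0 thus ?thesis using q Suc by simp
    next
      case (Suc q'') hence "n + i = 2*n*(2 + q'')" using q \<open>q = Suc q'\<close> by simp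
      hence "n + i \<ge> 4*n" by (simp add: algebra_simps)
      thus ?thesis using assms by simp
    qed
  qed
next
  assume "i = n" thus "2*n dvd n+i" by (simp add: mult_2)
qed

lemma coeff_extract:
  fixes f :: "int poly"
  assumes deg: "degree f \<le> 2*n"
  shows "[(\<Sum>z\<in>{0..<p}. z^n * poly f z) = - coeff f n] (mod p)"
proof -
  have n1: "n \<ge> 1" using n_pos[OF pp hn] .
  have pf: "poly f z = (\<Sum>i\<le>2*n. coeff f i * z^i)" for z
  proof -
    have "poly f z = (\<Sum>i\<le>degree f. coeff f i * z^i)" by (rule poly_altdef)
    also have "\<dots> = (\<Sum>i\<le>2*n. coeff f i * z^i)"
      by (rule sum.mono_neutral_left) (use deg in \<open>auto simp: coeff_eq_0\<close>)
    finally show ?thesis .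
  qed
  have "(\<Sum>z\<in>{0..<p}. z^n * poly f z) = (\<Sum>z\<in>{0..<p}. \<Sum>i\<le>2*n. coeff f i * z^(n+i))"
    unfolding pf by (simp add: sum_distrib_left power_add algebra_simps)
  also have "\<dots> = (\<Sum>i\<le>2*n. coeff f i * (\<Sum>z\<in>{0..<p}. z^(n+i)))"
    by (subst sum.swap) (simp add: sum_distrib_left)
  finally have e1: "(\<Sum>z\<in>{0..<p}. z^n * poly f z) = (\<Sum>i\<le>2*n. coeff f i * (\<Sum>z\<in>{0..<p}. z^(n+i)))" .
  have "[(\<Sum>i\<le>2*n. coeff f i * (\<Sum>z\<in>{0..<p}. z^(n+i))) = (\<Sum>i\<le>2*n. coeff f i * (if i = n then -1 else 0))] (mod p)"
  proof (rule cong_sum, rule cong_mult[OF cong_refl])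
    fix i assume i: "i \<in> {..2*n}"
    have "[(\<Sum>z\<in>{0..<p}. z^(n+i)) = (if 2*n dvd (n+i) then -1 else 0)] (mod p)"
      using power_sum[OF pp hn, of "n+i"] n1 by simp
    thus "[(\<Sum>z\<in>{0..<p}. z^(n+i)) = (if i = n then -1 else 0)] (mod p)"
      using dvd_shift[of i] i n1 by simp
  qed
  moreover have "(\<Sum>i\<le>2*n. coeff f i * (if i = n then -1 else 0)) = - coeff f n"
  proof -
    have "(\<Sum>i\<le>2*n. coeff f i * (if i = n then -1 else 0)) = (\<Sum>i\<le>2*n. if i = n then - coeff f i else 0)"
      by (rule sum.cong) auto
    also have "\<dots> = - coeff f n" by simp
    finally show ?thesis .
  qed
  ultimately show ?thesis using e1 by simp
qed

lemma binom_cong: "k \<le> n \<Longrightarrow> [int (2*k choose k) = (-4)^k * int (n choose k)] (mod p)"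
proof (induction k)
  case 0 then show ?case by simp
next
  case (Suc k)
  have IH: "[int (2*k choose k) = (-4)^k * int (n choose k)] (mod p)" using Suc by simp
  have a: "Suc k * (n choose Suc k) = (n - k) * (n choose k)"
    using binomial_absorption[of k n] binomial_absorb_comp[of n k] by simp
  have b1: "Suc k * ((2*k+2) choose Suc k) = (2*k+2) * ((2*k+1) choose k)"
    using binomial_absorption[of k "2*k+2"] by simp
  have b2: "(k+1) * ((2*k+1) choose k) = (2*k+1) * ((2*k) choose k)"
    using binomial_absorb_comp[of "2*k+1" k] by (simp add: Suc_diff_le)
  have b: "Suc k * (2*Suc k choose Suc k) = 2*(2*k+1)*(2*k choose k)"
  proof -
    have "Suc k * (2*Suc k choose Suc k) = 2 * ((k+1) * ((2*k+1) choose k))"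
      using b1 by simp
    thus ?thesis using b2 by simp
  qed
  define C where "C = int (2*k choose k)"
  define B where "B = int (n choose k)"
  have kn: "k < n" using Suc by simp
  have ia: "int (Suc k) * int (n choose Suc k) = (int n - int k) * B"
    using arg_cong[OF a, of int] kn unfolding B_def by (simp add: of_nat_diff algebra_simps)
  have ib: "int (Suc k) * int (2*Suc k choose Suc k) = 2*(2*int k+1)*C"
  proof -
    have "int (Suc k) * int (2*Suc k choose Suc k) = int (Suc k * (2*Suc k choose Suc k))" by (simp only: of_nat_mult)
    also have "\<dots> = int (2*(2*k+1)*(2*k choose k))" by (simp only: b)
    also have "\<dots> = 2*(2*int k+1)*C" unfolding C_def by (simp add: algebra_simps)
    finally show ?thesis .
  qed
  have XY: "[2*(2*int k+1)*C = 2*(2*int k+1)*((-4)^k * B)] (mod p)"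
    using IH unfolding C_def B_def by (rule cong_scalar_left)
  have YZ: "2*(2*int k+1)*((-4)^k * B) = int (Suc k) * ((-4)^Suc k * int (n choose Suc k)) + p * (2*(-4)^k*B)"
  proof -
    have "int (Suc k) * ((-4)^Suc k * int (n choose Suc k)) = (-4)^Suc k * (int (Suc k) * int (n choose Suc k))"
      by (simp only: mult.left_commute)
    also have "\<dots> = (-4)^Suc k * ((int n - int k) * B)" by (simp only: ia)
    finally have "int (Suc k) * ((-4)^Suc k * int (n choose Suc k)) = (-4)^Suc k * ((int n - int k) * B)" .
    thus ?thesis using hn by (simp add: algebra_simps)
  qed
  have "[int (Suc k) * int (2*Suc k choose Suc k) = int (Suc k) * ((-4)^Suc k * int (n choose Suc k))] (mod p)"
  proof -
    have "[2*(2*int k+1)*((-4)^k * B) = int (Suc k) * ((-4)^Suc k * int (n choose Suc k))] (mod p)"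
      unfolding YZ by (simp add: cong_iff_dvd_diff)
    thus ?thesis using XY ib cong_trans by simp
  qed
  moreover have "coprime (int (Suc k)) p"
  proof -
    have "\<not> p dvd int (Suc k)" using kn hn by (simp add: zdvd_not_zless)
    thus ?thesis using cop[OF pp] by blast
  qed
  ultimately show ?case using cong_mult_lcancel by blast
qed

end



context fixes p :: int and n :: nat assumes pp: "prime p" and hn: "p = 2 * int n + 1"
begin

lemma sumL0: "(\<Sum>w\<in>{0..<p}. Legendre w p) = 0"
proof -
  define S where "S = (\<Sum>w\<in>{0..<p}. Legendre w p)"
  have n1: "n \<ge> 1" using n_pos[OF pp hn] .
  have "[S = (\<Sum>w\<in>{0..<p}. w^n)] (mod p)" unfolding S_def
    by (rule cong_sum) (rule euler[OF pp hn])
  moreover have "[(\<Sum>w\<in>{0..<p}. w^n) = (if 2*n dvd n then -1 else 0)] (mod p)"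
    using power_sum[OF pp hn, of n] n1 by simp
  moreover have "\<not> 2*n dvd n" using n1 by (auto dest: dvd_imp_le)
  ultimately have "[S = 0] (mod p)" using cong_trans by fastforce
  hence dS: "p dvd S" by (simp add: cong_0_iff)
  have "{0..<p} = insert 0 {1..<p}" using p_gt2[OF pp hn] by auto
  hence "S = (\<Sum>w\<in>{1..<p}. Legendre w p)" unfolding S_def using Legendre_0_iff[OF pp hn, of 0] by simp
  hence "\<bar>S\<bar> \<le> (\<Sum>w\<in>{1..<p}. \<bar>Legendre w p\<bar>)" by simp
  also have "\<dots> \<le> (\<Sum>w\<in>{1..<p}. 1)"
  proof (rule sum_mono)
    fix w show "\<bar>Legendre w p\<bar> \<le> 1" using Legendre_vals[OF pp hn, of w] by auto
  qed
  also have "\<dots> = p - 1" using p_gt2[OF pp hn] by simp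
  finally have "\<bar>S\<bar> < p" by simp
  show ?thesis
  proof (rule ccontr)
    assume "\<not> ?thesis" hence "S \<noteq> 0" unfolding S_def by simp
    hence "\<bar>p\<bar> \<le> \<bar>S\<bar>" using dS dvd_imp_le_int by blast
    thus False using \<open>\<bar>S\<bar> < p\<close> by simp
  qed
qed

lemma sq_cong_iff: "[y^2 = y0^2] (mod p) \<longleftrightarrow> [y = y0] (mod p) \<or> [y = -y0] (mod p)"
proof -
  have "[y^2 = y0^2] (mod p) \<longleftrightarrow> p dvd (y - y0) * (y + y0)"
    by (simp add: cong_iff_dvd_diff power2_eq_square algebra_simps)
  also have "\<dots> \<longleftrightarrow> p dvd (y - y0) \<or> p dvd (y + y0)" using pp by (simp add: prime_dvd_mult_iff)
  also have "\<dots> \<longleftrightarrow> [y = y0] (mod p) \<or> [y = -y0] (mod p)" by (simp add: cong_iff_dvd_diff)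
  finally show ?thesis .
qed

lemma range_cong: "y \<in> {0..<p} \<Longrightarrow> [y = a] (mod p) \<longleftrightarrow> y = a mod p"
  by (simp add: cong_def)

lemma sqcount: "(\<Sum>y\<in>{0..<p}. if [y^2 = D] (mod p) then 1 else 0) = 1 + Legendre D p"
proof -
  have p0: "p > 2" using p_gt2[OF pp hn] .
  have "(\<Sum>y\<in>{0..<p}. if [y^2 = D] (mod p) then 1 else (0::int)) = (\<Sum>y\<in>{y\<in>{0..<p}. [y^2 = D] (mod p)}. 1)"
    by (rule sum.inter_filter[symmetric]) simp
  also have "\<dots> = int (card {y\<in>{0..<p}. [y^2 = D] (mod p)})" by simp
  finally have e: "(\<Sum>y\<in>{0..<p}. if [y^2 = D] (mod p) then 1 else (0::int)) = int (card {y\<in>{0..<p}. [y^2 = D] (mod p)})" .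
  show ?thesis
  proof (cases "p dvd D")
    case True
    have "{y\<in>{0..<p}. [y^2 = D] (mod p)} = {0}"
    proof (intro equalityI subsetI)
      fix y assume y: "y \<in> {y\<in>{0..<p}. [y^2 = D] (mod p)}"
      hence "[y^2 = D] (mod p)" by simp
      hence "p dvd y^2" using True cong_dvd_iff by blast
      hence "p dvd y" using pp prime_dvd_power_iff by (metis zero_less_numeral)
      moreover have "0 \<le> y" "y < p" using y by auto
      ultimately have "y = 0" using zdvd_not_zless[of y p] by (cases "y = 0") auto
      thus "y \<in> {0}" by simp
    next
      fix y assume "y \<in> {0::int}" thus "y \<in> {y\<in>{0..<p}. [y^2 = D] (mod p)}"
        using True p0 by (simp add: cong_0_iff cong_sym_eq)
    qed
    moreover have "Legendre D p = 0" using True Legendre_0_iff[OF pp hn] by simp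
    ultimately show ?thesis using e by simp
  next
    case False
    show ?thesis
    proof (cases "QuadRes p D")
      case True
      then obtain y0 where y0: "[y0^2 = D] (mod p)" unfolding QuadRes_def by blast
      have ny0: "\<not> p dvd y0"
      proof
        assume "p dvd y0" hence "p dvd y0^2" by (simp add: power2_eq_square)
        thus False using y0 False cong_dvd_iff by blast
      qed
      have iff: "[y^2 = D] (mod p) \<longleftrightarrow> [y^2 = y0^2] (mod p)" for y
        using y0 cong_sym cong_trans by blast
      have "{y\<in>{0..<p}. [y^2 = D] (mod p)} = {y0 mod p, (-y0) mod p}"
        using p0 by (auto simp: iff sq_cong_iff range_cong)
      moreover have "y0 mod p \<noteq> (-y0) mod p"
      proof
        assume "y0 mod p = (-y0) mod p"
        hence "p dvd y0 - (-y0)" by (simp add: cong_def[symmetric] cong_iff_dvd_diff)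
        hence "p dvd 2*y0" by simp
        hence "p dvd 2 \<or> p dvd y0" using pp prime_dvd_mult_iff by blast
        thus False using ny0 p0 zdvd_not_zless by fastforce
      qed
      moreover have "Legendre D p = 1" using True False unfolding Legendre_def by (simp add: cong_0_iff)
      ultimately show ?thesis using e by simp
    next
      case nq: False
      have "{y\<in>{0..<p}. [y^2 = D] (mod p)} = {}" using nq unfolding QuadRes_def by auto
      moreover have "Legendre D p = -1" using nq False unfolding Legendre_def by (simp add: cong_0_iff)
      ultimately show ?thesis using e by simp
    qed
  qed
qed

definition iv :: "int \<Rightarrow> int" where "iv z = (SOME w. [z*w = 1] (mod p))"

lemma iv: "\<not> p dvd z \<Longrightarrow> [z * iv z = 1] (mod p)"
  unfolding iv_def using cong_solve_coprime_int[of z p] cop[OF pp] by (metis someI_ex)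

end



context fixes p :: int and n :: nat assumes pp: "prime p" and hn: "p = 2 * int n + 1"
begin

lemma dvd_of_eq: "X = Y + p * W \<Longrightarrow> [X = Y] (mod p)"
  by (simp add: cong_iff_dvd_diff)

lemma isogeny:
  assumes B: "\<not> p dvd B"
  shows "(\<Sum>z\<in>{0..<p}. Legendre (z*(z^2+A*z+B)) p) = (\<Sum>u\<in>{0..<p}. Legendre (u*(u^2-2*A*u+A^2-4*B)) p)"
proof -
  have p2: "p > 2" using p_gt2[OF pp hn] .
  note Lc = Legendre_cong[OF pp hn]
  have ranges: "{0..<p} = insert 0 {1..<p}" using p2 by auto
  have ndz: "\<not> p dvd z" if "z \<in> {1..<p}" for z using that zdvd_not_zless by auto
  have LHS: "(\<Sum>z\<in>{0..<p}. Legendre (z*(z^2+A*z+B)) p) = (\<Sum>z\<in>{1..<p}. Legendre (z + A + B * iv p z) p)"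
  proof -
    have "(\<Sum>z\<in>{0..<p}. Legendre (z*(z^2+A*z+B)) p) = (\<Sum>z\<in>{1..<p}. Legendre (z*(z^2+A*z+B)) p)"
      unfolding ranges using Legendre_0_iff[OF pp hn, of 0] by simp
    also have "\<dots> = (\<Sum>z\<in>{1..<p}. Legendre (z + A + B * iv p z) p)"
    proof (rule sum.cong[OF refl])
      fix z assume z: "z \<in> {1..<p}"
      have e: "[z * iv p z = 1] (mod p)" using iv[OF pp hn ndz[OF z]] .
      then obtain k where k: "z * iv p z = 1 + p*k" by (metis cong_iff_lin cong_sym)
      have "z*z*(z + A + B * iv p z) = z*(z^2+A*z+B) + p*(B*z*k)"
        using k by (simp add: algebra_simps power2_eq_square)
      hence "[z*(z^2+A*z+B) = z*z*(z + A + B * iv p z)] (mod p)" using dvd_of_eq cong_sym by blast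
      hence "Legendre (z*(z^2+A*z+B)) p = Legendre (z*z*(z + A + B * iv p z)) p" by (rule Lc)
      also have "\<dots> = Legendre (z + A + B * iv p z) p" using Legendre_sq[OF pp hn ndz[OF z]] .
      finally show "Legendre (z*(z^2+A*z+B)) p = Legendre (z + A + B * iv p z) p" .
    qed
    finally show ?thesis .
  qed
  have RHS: "(\<Sum>u\<in>{0..<p}. Legendre (u*(u^2-2*A*u+A^2-4*B)) p) = (\<Sum>w\<in>{0..<p}. Legendre (w+A) p * Legendre (w^2-4*B) p)"
  proof -
    have "(\<Sum>u\<in>{0..<p}. Legendre (u*(u^2-2*A*u+A^2-4*B)) p) = (\<Sum>w\<in>{0..<p}. Legendre (((1*w+A) mod p)*(((1*w+A) mod p)^2-2*A*((1*w+A) mod p)+A^2-4*B)) p)"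
      by (rule reindex_affine[OF pp hn]) (use p2 in simp)
    also have "\<dots> = (\<Sum>w\<in>{0..<p}. Legendre ((w+A)*(w^2-4*B)) p)"
    proof (rule sum.cong[OF refl])
      fix w
      have h: "[(1*w+A) mod p = w+A] (mod p)" by (simp add: cong_def)
      have "[((1*w+A) mod p)*(((1*w+A) mod p)^2-2*A*((1*w+A) mod p)+A^2-4*B) = (w+A)*((w+A)^2-2*A*(w+A)+A^2-4*B)] (mod p)"
        by (intro cong_mult cong_diff cong_add cong_pow cong_refl h)
      moreover have "(w+A)*((w+A)^2-2*A*(w+A)+A^2-4*B) = (w+A)*(w^2-4*B)"
        by (simp add: algebra_simps power2_eq_square)
      ultimately show "Legendre (((1*w+A) mod p)*(((1*w+A) mod p)^2-2*A*((1*w+A) mod p)+A^2-4*B)) p = Legendre ((w+A)*(w^2-4*B)) p"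
        using Lc by simp
    qed
    finally show ?thesis by (simp add: Legendre_mult[OF pp hn])
  qed
  have S0: "(\<Sum>w\<in>{0..<p}. Legendre (w+A) p) = 0"
  proof -
    have "(\<Sum>w\<in>{0..<p}. Legendre w p) = (\<Sum>w\<in>{0..<p}. Legendre ((1*w+A) mod p) p)"
      by (rule reindex_affine[OF pp hn]) (use p2 in simp)
    also have "\<dots> = (\<Sum>w\<in>{0..<p}. Legendre (w+A) p)"
      by (rule sum.cong[OF refl]) (rule Lc, simp add: cong_def)
    finally show ?thesis using sumL0[OF pp hn] by simp
  qed
  define c where "c w z = [z^2 - w*z + B = 0] (mod p)" for w z
  have cnt: "1 + Legendre (w^2-4*B) p = (\<Sum>z\<in>{0..<p}. if c w z then 1 else 0)" for w
  proof -
    have "1 + Legendre (w^2-4*B) p = (\<Sum>y\<in>{0..<p}. if [y^2 = w^2-4*B] (mod p) then 1 else 0)"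
      using sqcount[OF pp hn] by simp
    also have "\<dots> = (\<Sum>z\<in>{0..<p}. if [((2*z+(-w)) mod p)^2 = w^2-4*B] (mod p) then 1 else 0)"
      by (rule reindex_affine[OF pp hn]) (use p2 in \<open>simp add: zdvd_not_zless\<close>)
    also have "\<dots> = (\<Sum>z\<in>{0..<p}. if c w z then 1 else 0)"
    proof (rule sum.cong[OF refl])
      fix z
      have "[((2*z+(-w)) mod p)^2 = w^2-4*B] (mod p) \<longleftrightarrow> [(2*z-w)^2 = w^2-4*B] (mod p)"
      proof -
        have "[((2*z+(-w)) mod p)^2 = (2*z-w)^2] (mod p)" by (intro cong_pow) (simp add: cong_def)
        thus ?thesis using cong_sym cong_trans by blast
      qed
      also have "\<dots> \<longleftrightarrow> p dvd 4*(z^2 - w*z + B)"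
      proof -
        have "(2*z-w)^2 - (w^2-4*B) = 4*(z^2 - w*z + B)" by (simp add: algebra_simps power2_eq_square)
        thus ?thesis by (simp only: cong_iff_dvd_diff)
      qed
      also have "\<dots> \<longleftrightarrow> p dvd (z^2 - w*z + B)"
      proof -
        have "\<not> p dvd 4"
        proof
          assume "p dvd 4" hence "p dvd 2*2" by simp
          hence "p dvd 2" using pp prime_dvd_mult_iff by blast
          thus False using p2 zdvd_not_zless by fastforce
        qed
        thus ?thesis using pp prime_dvd_mult_iff by blast
      qed
      also have "\<dots> \<longleftrightarrow> c w z" unfolding c_def by (simp add: cong_0_iff)
      finally show "(if [((2*z+(-w)) mod p)^2 = w^2-4*B] (mod p) then 1 else 0) = (if c w z then (1::int) else 0)"
        by simp
    qed
    finally show ?thesis .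
  qed
  have "(\<Sum>w\<in>{0..<p}. Legendre (w+A) p * Legendre (w^2-4*B) p)
      = (\<Sum>w\<in>{0..<p}. Legendre (w+A) p * (1 + Legendre (w^2-4*B) p)) - (\<Sum>w\<in>{0..<p}. Legendre (w+A) p)"
    by (simp add: algebra_simps sum.distrib)
  also have "\<dots> = (\<Sum>w\<in>{0..<p}. Legendre (w+A) p * (1 + Legendre (w^2-4*B) p))" using S0 by simp
  also have "\<dots> = (\<Sum>w\<in>{0..<p}. \<Sum>z\<in>{0..<p}. if c w z then Legendre (w+A) p else 0)"
  proof (rule sum.cong[OF refl])
    fix w
    have "Legendre (w+A) p * (1 + Legendre (w^2-4*B) p) = Legendre (w+A) p * (\<Sum>z\<in>{0..<p}. if c w z then 1 else 0)"
      by (simp only: cnt)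
    also have "\<dots> = (\<Sum>z\<in>{0..<p}. Legendre (w+A) p * (if c w z then 1 else 0))" by (rule sum_distrib_left)
    also have "\<dots> = (\<Sum>z\<in>{0..<p}. if c w z then Legendre (w+A) p else 0)" by (rule sum.cong) auto
    finally show "Legendre (w+A) p * (1 + Legendre (w^2-4*B) p) = (\<Sum>z\<in>{0..<p}. if c w z then Legendre (w+A) p else 0)" .
  qed
  also have "\<dots> = (\<Sum>z\<in>{0..<p}. \<Sum>w\<in>{0..<p}. if c w z then Legendre (w+A) p else 0)"
    by (rule sum.swap)
  also have "\<dots> = (\<Sum>z\<in>{0..<p}. if z = 0 then 0 else Legendre (z + A + B * iv p z) p)"
  proof (rule sum.cong[OF refl])
    fix z assume z: "z \<in> {0..<p}"
    show "(\<Sum>w\<in>{0..<p}. if c w z then Legendre (w+A) p else 0) = (if z = 0 then 0 else Legendre (z + A + B * iv p z) p)"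
    proof (cases "z = 0")
      case True
      have "\<not> c w z" for w unfolding c_def True using B by (simp add: cong_0_iff)
      thus ?thesis using True by simp
    next
      case False
      hence z1: "z \<in> {1..<p}" using z by auto
      have e: "[z * iv p z = 1] (mod p)" using iv[OF pp hn ndz[OF z1]] .
      then obtain k where k: "z * iv p z = 1 + p*k" by (metis cong_iff_lin cong_sym)
      have ciff: "c w z \<longleftrightarrow> w = (z + B * iv p z) mod p" if w: "w \<in> {0..<p}" for w
      proof -
        define Q where "Q = z^2 - w*z + B"
        define R where "R = z + B * iv p z - w"
        have i1: "iv p z * Q = R + p * (k * (z - w))" unfolding Q_def R_def
          using k by (simp add: algebra_simps power2_eq_square)
        have i2: "z * R = Q + p * (B * k)" unfolding Q_def R_def
          using k by (simp add: algebra_simps power2_eq_square)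
        have "p dvd Q \<longleftrightarrow> p dvd R"
        proof
          assume "p dvd Q" hence "p dvd iv p z * Q" by simp
          thus "p dvd R" unfolding i1 by (simp add: dvd_add_left_iff)
        next
          assume "p dvd R" hence "p dvd z * R" by simp
          thus "p dvd Q" unfolding i2 by (simp add: dvd_add_left_iff)
        qed
        moreover have "c w z \<longleftrightarrow> p dvd Q" unfolding c_def Q_def by (simp add: cong_0_iff)
        moreover have "p dvd R \<longleftrightarrow> [w = z + B * iv p z] (mod p)"
        proof -
          have "R = - (w - (z + B * iv p z))" unfolding R_def by simp
          hence "p dvd R \<longleftrightarrow> p dvd (w - (z + B * iv p z))" by (simp only: dvd_minus_iff)
          thus ?thesis by (simp only: cong_iff_dvd_diff)
        qed
        ultimately show ?thesis using range_cong[OF pp hn w] by simp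
      qed
      have "(\<Sum>w\<in>{0..<p}. if c w z then Legendre (w+A) p else 0)
          = (\<Sum>w\<in>{0..<p}. if w = (z + B * iv p z) mod p then Legendre (w+A) p else 0)"
        by (rule sum.cong[OF refl]) (simp add: ciff)
      also have "\<dots> = Legendre ((z + B * iv p z) mod p + A) p"
        using p2 by simp
      also have "\<dots> = Legendre (z + A + B * iv p z) p"
      proof (rule Lc)
        have "[(z + B * iv p z) mod p + A = (z + B * iv p z) + A] (mod p)"
          by (rule cong_add) (simp_all add: cong_def)
        thus "[(z + B * iv p z) mod p + A = z + A + B * iv p z] (mod p)" by (simp add: ac_simps)
      qed
      finally show ?thesis using False by simp
    qed
  qed
  also have "\<dots> = (\<Sum>z\<in>{1..<p}. Legendre (z + A + B * iv p z) p)"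
  proof -
    have "(\<Sum>z\<in>insert 0 {1..<p}. if z = 0 then 0 else Legendre (z + A + B * iv p z) p)
       = (\<Sum>z\<in>{1..<p}. if z = 0 then 0 else Legendre (z + A + B * iv p z) p)" by simp
    also have "\<dots> = (\<Sum>z\<in>{1..<p}. Legendre (z + A + B * iv p z) p)" by (rule sum.cong) auto
    finally show ?thesis unfolding ranges .
  qed
  finally show ?thesis using LHS RHS by simp
qed

end



context fixes p :: int and n :: nat assumes pp: "prime p" and hn: "p = 2 * int n + 1"
begin

lemma fermat2: assumes "\<not> p dvd a" shows "[a^(2*n) = 1] (mod p)"
proof -
  have "[a^n = Legendre a p] (mod p)" by (rule Legendre_pow_n[OF pp hn])
  hence "[(a^n)^2 = (Legendre a p)^2] (mod p)" by (rule cong_pow)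
  moreover have "(Legendre a p)^2 = 1" using Legendre_vals[OF pp hn, of a] Legendre_0_iff[OF pp hn, of a] assms by auto
  ultimately show ?thesis by (simp add: power_mult mult.commute)
qed

lemma coeff_lin_pow: "coeff ([:T,1:]^m) j = of_nat (m choose j) * (T::int)^(m-j)"
proof (cases "j \<le> m")
  case True thus ?thesis using coeff_linear_poly_power[OF True, of T 1] by simp
next
  case False
  have "degree ([:T,1:]^m) \<le> m" by (simp add: degree_linear_power)
  hence "coeff ([:T,1:]^m) j = 0" using False by (intro coeff_eq_0) simp
  thus ?thesis using False by simp
qed

lemma Pint_extract:
  fixes T :: int
  shows "[(\<Sum>k=0..n div 2. (-1)^k * int ((n choose k) * ((2*n - 2*k) choose n)) * T^(n-2*k))
          = - (\<Sum>s\<in>{0..<p}. (s*((s+T)^2-1))^n)] (mod p)"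
proof -
  define f2 :: "int poly" where "f2 = (\<Sum>k\<le>n. smult (of_nat (n choose k) * (-1)^k) ([:T,1:]^(2*(n-k))))"
  have pf: "poly f2 s = ((s+T)^2-1)^n" for s
  proof -
    have "poly f2 s = (\<Sum>k\<le>n. of_nat (n choose k) * (-1)^k * (T+s)^(2*(n-k)))"
      unfolding f2_def by (simp add: poly_sum)
    also have "\<dots> = (\<Sum>k\<le>n. of_nat (n choose k) * (-1)^k * ((s+T)^2)^(n-k))"
      by (simp add: power_mult add.commute)
    also have "\<dots> = ((-1) + (s+T)^2)^n" by (rule binomial_ring[symmetric])
    finally show ?thesis by simp
  qed
  have deg: "degree f2 \<le> 2*n" unfolding f2_def
  proof (rule degree_sum_le)
    fix k assume "k \<in> {..n}"
    have "degree ([:T,1:]^(2*(n-k))) \<le> 2*n" by (simp add: degree_linear_power)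
    thus "degree (smult (of_nat (n choose k) * (-1)^k) ([:T,1:]^(2*(n-k)))) \<le> 2*n"
      using degree_smult_le order_trans by blast
  qed simp
  have cf: "coeff f2 n = (\<Sum>k\<le>n. (of_nat (n choose k) * (-1)^k) * (of_nat (2*(n-k) choose n) * T^(2*(n-k)-n)))"
    unfolding f2_def by (simp add: coeff_sum coeff_lin_pow)
  also have "\<dots> = (\<Sum>k=0..n div 2. (of_nat (n choose k) * (-1)^k) * (of_nat (2*(n-k) choose n) * T^(2*(n-k)-n)))"
  proof (rule sum.mono_neutral_right)
    show "{0..n div 2} \<subseteq> {..n}" by auto
  next
    show "\<forall>k\<in>{..n} - {0..n div 2}. (of_nat (n choose k) * (-1)^k) * (of_nat (2*(n-k) choose n) * T^(2*(n-k)-n)) = 0"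
    proof
      fix k assume "k \<in> {..n} - {0..n div 2}"
      hence "2*(n-k) < n" by auto
      thus "(of_nat (n choose k) * (-1)^k) * (of_nat (2*(n-k) choose n) * T^(2*(n-k)-n)) = 0" by simp
    qed
  qed simp
  also have "\<dots> = (\<Sum>k=0..n div 2. (-1)^k * int ((n choose k) * ((2*n - 2*k) choose n)) * T^(n-2*k))"
  proof (rule sum.cong[OF refl])
    fix k assume "k \<in> {0..n div 2}"
    hence "2*(n-k) = 2*n-2*k" "2*(n-k)-n = n-2*k" by auto
    thus "(of_nat (n choose k) * (-1)^k) * (of_nat (2*(n-k) choose n) * T^(2*(n-k)-n)) = (-1)^k * int ((n choose k) * ((2*n - 2*k) choose n)) * T^(n-2*k)"
      by (simp add: algebra_simps)
  qed
  finally have cf2: "coeff f2 n = (\<Sum>k=0..n div 2. (-1)^k * int ((n choose k) * ((2*n - 2*k) choose n)) * T^(n-2*k))" .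
  have "[(\<Sum>s\<in>{0..<p}. s^n * poly f2 s) = - coeff f2 n] (mod p)" by (rule coeff_extract[OF pp hn deg])
  moreover have "(\<Sum>s\<in>{0..<p}. s^n * poly f2 s) = (\<Sum>s\<in>{0..<p}. (s*((s+T)^2-1))^n)"
    by (simp add: pf power_mult_distrib)
  ultimately have "[(\<Sum>s\<in>{0..<p}. (s*((s+T)^2-1))^n) = - coeff f2 n] (mod p)" by simp
  hence "[- (\<Sum>s\<in>{0..<p}. (s*((s+T)^2-1))^n) = coeff f2 n] (mod p)"
    by (metis cong_minus_minus_iff minus_minus)
  thus ?thesis unfolding cf2 using cong_sym by blast
qed

lemma Hint_extract:
  fixes c :: int
  shows "[(\<Sum>k=0..n. int (n choose k)^2 * c^(2*k)) = - (\<Sum>z\<in>{0..<p}. (z*(z^2+(1+c^2)*z+c^2))^n)] (mod p)"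
proof -
  define f1 :: "int poly" where "f1 = [:1,1:]^n * [:c^2,1:]^n"
  have deg: "degree f1 \<le> 2*n" unfolding f1_def
  proof -
    have "degree ([:1,1:]^n * [:c^2,1:]^n) \<le> degree ([:1::int,1:]^n) + degree ([:c^2,1:]^n)" by (rule degree_mult_le)
    moreover have "degree ([:1::int,1:]^n) \<le> n" by (simp add: degree_linear_power)
    moreover have "degree ([:c^2,1:]^n) \<le> n" by (simp add: degree_linear_power)
    ultimately show "degree ([:1,1:]^n * [:c^2,1:]^n) \<le> 2*n" by simp
  qed
  have "coeff f1 n = (\<Sum>i\<le>n. coeff ([:1,1:]^n) i * coeff ([:c^2,1:]^n) (n-i))" unfolding f1_def by (rule coeff_mult)
  also have "\<dots> = (\<Sum>i\<le>n. int (n choose i)^2 * c^(2*i))"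
  proof (rule sum.cong[OF refl])
    fix i assume i: "i \<in> {..n}"
    have "n - (n - i) = i" using i by auto
    moreover have "n choose (n-i) = n choose i" using i by (simp add: binomial_symmetric[symmetric])
    ultimately show "coeff ([:1,1:]^n) i * coeff ([:c^2,1:]^n) (n-i) = int (n choose i)^2 * c^(2*i)"
      by (simp add: coeff_lin_pow power2_eq_square power_mult)
  qed
  also have "\<dots> = (\<Sum>k=0..n. int (n choose k)^2 * c^(2*k))" by (simp add: atMost_atLeast0)
  finally have cf: "coeff f1 n = (\<Sum>k=0..n. int (n choose k)^2 * c^(2*k))" .
  have "[(\<Sum>z\<in>{0..<p}. z^n * poly f1 z) = - coeff f1 n] (mod p)" by (rule coeff_extract[OF pp hn deg])
  moreover have "(\<Sum>z\<in>{0..<p}. z^n * poly f1 z) = (\<Sum>z\<in>{0..<p}. (z*(z^2+(1+c^2)*z+c^2))^n)"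
  proof (rule sum.cong[OF refl])
    fix z
    have e: "z*(z^2+(1+c^2)*z+c^2) = z * ((1+z) * (c^2+z))" by (simp add: algebra_simps power2_eq_square)
    have "poly f1 z = (1+z)^n * (c^2+z)^n" unfolding f1_def by (simp add: poly_power)
    hence "z^n * poly f1 z = (z * ((1+z) * (c^2+z)))^n" by (simp only: power_mult_distrib)
    thus "z^n * poly f1 z = (z*(z^2+(1+c^2)*z+c^2))^n" by (simp only: e)
  qed
  ultimately have "[(\<Sum>z\<in>{0..<p}. (z*(z^2+(1+c^2)*z+c^2))^n) = - coeff f1 n] (mod p)" by simp
  hence "[- (\<Sum>z\<in>{0..<p}. (z*(z^2+(1+c^2)*z+c^2))^n) = coeff f1 n] (mod p)"
    by (metis cong_minus_minus_iff minus_minus)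
  thus ?thesis unfolding cf using cong_sym by blast
qed

lemma sum_pow_legendre: "[(\<Sum>z\<in>{0..<p}. (F z)^n) = (\<Sum>z\<in>{0..<p}. Legendre (F z) p)] (mod p)"
  by (rule cong_sum) (rule Legendre_pow_n[OF pp hn])

lemma fact_ratio:
  assumes k: "k \<le> n div 2"
  shows "(of_nat (fact (2*n - 2*k)) / of_nat (fact k * fact (n - k) * fact (n - 2*k)) :: rat)
         = of_nat ((n choose k) * ((2*n - 2*k) choose n))"
proof -
  have kn: "k \<le> n" using k by auto
  have 1: "fact k * fact (n - k) * (n choose k) = (fact n :: nat)" by (rule binomial_fact_lemma[OF kn])
  have nn: "n \<le> 2*n - 2*k" using k by auto
  have 2: "fact n * fact (2*n-2*k - n) * ((2*n-2*k) choose n) = (fact (2*n-2*k) :: nat)" by (rule binomial_fact_lemma[OF nn])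
  have e: "2*n-2*k - n = n - 2*k" using k by auto
  have "(fact (2*n-2*k) :: nat) = (fact k * fact (n - k) * fact (n - 2*k)) * ((n choose k) * ((2*n - 2*k) choose n))"
  proof -
    have "(fact (2*n-2*k) :: nat) = fact n * fact (n - 2*k) * ((2*n-2*k) choose n)" using 2 e by simp
    also have "\<dots> = (fact k * fact (n - k) * (n choose k)) * fact (n - 2*k) * ((2*n-2*k) choose n)" by (simp only: 1)
    finally show ?thesis by (simp only: ac_simps)
  qed
  hence "(of_nat (fact (2*n - 2*k)) :: rat) = of_nat (fact k * fact (n - k) * fact (n - 2*k)) * of_nat ((n choose k) * ((2*n - 2*k) choose n))"
    by (simp only: of_nat_mult[symmetric])
  moreover have "(of_nat (fact k * fact (n - k) * fact (n - 2*k)) :: rat) \<noteq> 0" by simp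
  ultimately show ?thesis by simp
qed

end



theorem theorem2p8:
  fixes p :: int and x :: rat
  assumes "prime p" and "odd p" and "in_Zp p x" and "\<not> qcong x 0 p"
  shows "qcong (\<Sum>k = 0..nat ((p - 1) div 2). of_nat ((2*k) choose k) ^ 2 * (x / 4) ^ (2*k))
               (of_int (qLegendre (- x) p) * legendreP (nat ((p - 1) div 2)) ((x + inverse x) / 2)) p"
proof -
  note pp = assms(1)
  define n where "n = nat ((p-1) div 2)"
  have p0: "p > 0" using pp prime_gt_0_int by blast
  have hn: "p = 2 * int n + 1" unfolding n_def using assms(2) p0 by (auto elim!: oddE)
  have p2: "p > 2" using p_gt2[OF pp hn] .
  note Lc = Legendre_cong[OF pp hn]
  have one: "Rr p 1 1" using Rr_int[OF pp, of 1] by simp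
  have two: "Rr p 2 2" using Rr_int[OF pp, of 2] by simp
  have four: "Rr p 4 4" using Rr_int[OF pp, of 4] by simp
  obtain c where xc: "Rr p x c" using in_Zp_Rr[OF pp assms(3)] by blast
  have zero: "Rr p 0 0" using Rr_int[OF pp, of 0] by simp
  have ncd: "\<not> p dvd c"
  proof
    assume "p dvd c" hence "[c = 0] (mod p)" by (simp add: cong_0_iff)
    hence "Rr p x 0" using Rr_cong[OF pp xc] by blast
    hence "qcong x 0 p" using qcong_intro[OF pp _ zero cong_refl] by blast
    thus False using assms(4) by simp
  qed
  have x0: "x \<noteq> 0"
  proof
    assume "x = 0" hence "Rr p 0 c" using xc by simp
    hence "[c = 0] (mod p)" using Rr_unique[OF pp _ zero] by blast
    thus False using ncd by (simp add: cong_0_iff)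
  qed
  have n2: "\<not> p dvd 2" using p2 zdvd_not_zless by fastforce
  have n4: "\<not> p dvd 4"
  proof
    assume "p dvd 4" hence "p dvd 2*2" by simp
    thus False using n2 pp prime_dvd_mult_iff by blast
  qed
  obtain ci where ci: "[c*ci = 1] (mod p)" using cong_solve_coprime_int cop[OF pp ncd] by blast
  obtain h where h: "[2*h = 1] (mod p)" using cong_solve_coprime_int cop[OF pp n2] by blast
  obtain q4 where q4: "[4*q4 = 1] (mod p)" using cong_solve_coprime_int cop[OF pp n4] by blast
  have xi: "Rr p (inverse x) ci" by (rule Rr_inverse[OF pp xc ci])
  have hi: "Rr p (inverse 2) h" by (rule Rr_inverse[OF pp two h])
  have q4i: "Rr p (inverse 4) q4" by (rule Rr_inverse[OF pp four q4])
  define t where "t = (x + inverse x) / 2"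
  define T where "T = (c + ci) * h"
  have tR: "Rr p t T" unfolding t_def T_def divide_inverse by (intro Rr_mult[OF pp] Rr_add[OF pp] xc xi hi)
  define l where "l = - (inverse x * inverse 2)"
  define lam where "lam = - (ci * h)"
  have lR: "Rr p l lam" unfolding l_def lam_def by (intro Rr_uminus[OF pp] Rr_mult[OF pp] xi hi)
  define A where "A = 1 + c^2"
  define B where "B = c^2"
  define a where "a = 1 + x^2"
  define b where "b = x^2"
  have aR: "Rr p a A" unfolding a_def A_def by (intro Rr_add[OF pp] Rr_pow[OF pp] one xc)
  have bR: "Rr p b B" unfolding b_def B_def by (intro Rr_pow[OF pp] xc)
  have nB: "\<not> p dvd B" unfolding B_def using ncd pp by (simp add: prime_dvd_power_iff)
  define Y where "Y u = u*(u^2-2*A*u+A^2-4*B)" for u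
  define S where "S = (\<Sum>u\<in>{0..<p}. Legendre (Y u) p)"
  define Lint where "Lint = (\<Sum>k=0..n. int ((2*k) choose k)^2 * (c*q4)^(2*k))"
  have x4: "Rr p (x/4) (c*q4)" unfolding divide_inverse by (intro Rr_mult[OF pp] xc q4i)
  have LR: "Rr p (\<Sum>k = 0..n. of_nat ((2*k) choose k) ^ 2 * (x / 4) ^ (2*k)) Lint"
    unfolding Lint_def by (intro Rr_sum[OF pp] Rr_mult[OF pp] Rr_pow[OF pp] Rr_nat[OF pp] x4)
  have q4h: "[q4 = h*h] (mod p)"
  proof -
    have "Rr p (inverse 2 * inverse 2) (h*h)" by (intro Rr_mult[OF pp] hi)
    moreover have "inverse 2 * inverse 2 = (inverse 4 :: rat)" by simp
    ultimately show ?thesis using Rr_unique[OF pp q4i] by simp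
  qed
  have L1: "[Lint = (\<Sum>k=0..n. int (n choose k)^2 * c^(2*k))] (mod p)"
    unfolding Lint_def
  proof (rule cong_sum)
    fix k assume k: "k \<in> {0..n}"
    have "[int ((2*k) choose k)^2 * (c*q4)^(2*k) = ((-4)^k * int (n choose k))^2 * (c*q4)^(2*k)] (mod p)"
      using binom_cong[OF pp hn, of k] k by (intro cong_mult cong_pow cong_refl) auto
    moreover have "((-4)^k * int (n choose k))^2 * (c*q4)^(2*k) = int (n choose k)^2 * c^(2*k) * (4*q4)^(2*k)"
    proof -
      have "((-4::int)^k)^2 = 4^(2*k)" by (simp add: power_mult[symmetric] mult.commute)
      thus ?thesis by (simp add: power_mult_distrib algebra_simps)
    qed
    moreover have "[int (n choose k)^2 * c^(2*k) * (4*q4)^(2*k) = int (n choose k)^2 * c^(2*k) * 1^(2*k)] (mod p)"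
      using q4 by (intro cong_mult cong_pow cong_refl)
    ultimately have "[int ((2*k) choose k)^2 * (c*q4)^(2*k) = int (n choose k)^2 * c^(2*k) * 1^(2*k)] (mod p)"
      by (simp only: cong_trans)
    thus "[int ((2*k) choose k)^2 * (c*q4)^(2*k) = int (n choose k)^2 * c^(2*k)] (mod p)" by simp
  qed
  have L2: "[(\<Sum>k=0..n. int (n choose k)^2 * c^(2*k)) = - S] (mod p)"
  proof -
    have "[(\<Sum>k=0..n. int (n choose k)^2 * c^(2*k)) = - (\<Sum>z\<in>{0..<p}. (z*(z^2+(1+c^2)*z+c^2))^n)] (mod p)"
      by (rule Hint_extract[OF pp hn])
    moreover have "[- (\<Sum>z\<in>{0..<p}. (z*(z^2+(1+c^2)*z+c^2))^n) = - (\<Sum>z\<in>{0..<p}. Legendre (z*(z^2+(1+c^2)*z+c^2)) p)] (mod p)"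
      using sum_pow_legendre[OF pp hn] by (simp add: cong_minus_minus_iff)
    moreover have "(\<Sum>z\<in>{0..<p}. Legendre (z*(z^2+(1+c^2)*z+c^2)) p) = S"
      unfolding S_def Y_def using isogeny[OF pp hn nB, of A] unfolding A_def B_def .
    ultimately show ?thesis using cong_trans by simp
  qed
  have qL: "qLegendre (- x) p = Legendre (-c) p"
  proof -
    have "qres p (-x) = (-c) mod p" by (rule qres_Rr[OF pp Rr_uminus[OF pp xc]])
    moreover have "Legendre ((-c) mod p) p = Legendre (-c) p" by (rule Lc) (simp add: cong_def)
    ultimately show ?thesis unfolding qLegendre_def by simp
  qed
  define Pint where "Pint = (\<Sum>k=0..n div 2. (-1)^k * int ((n choose k) * ((2*n - 2*k) choose n)) * T^(n-2*k))"
  have PR: "Rr p (legendreP n t) (h^n * Pint)"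
  proof -
    have e1: "(1::rat) / 2^n = inverse 2 ^ n" by (simp add: inverse_eq_divide power_one_over)
    have e2: "(\<Sum>k = 0..n div 2. of_int ((- 1) ^ k) * of_nat (fact (2 * n - 2 * k)) / of_nat (fact k * fact (n - k) * fact (n - 2 * k)) * t ^ (n - 2 * k))
          = (\<Sum>k=0..n div 2. of_int ((-1)^k) * of_nat ((n choose k) * ((2*n - 2*k) choose n)) * t^(n-2*k))"
    proof (rule sum.cong[OF refl])
      fix k assume "k \<in> {0..n div 2}"
      hence "k \<le> n div 2" by simp
      hence fr: "(of_nat (fact (2*n - 2*k)) / of_nat (fact k * fact (n - k) * fact (n - 2*k)) :: rat)
         = of_nat ((n choose k) * ((2*n - 2*k) choose n))" by (rule fact_ratio[OF pp hn])
      show "of_int ((- 1) ^ k) * of_nat (fact (2 * n - 2 * k)) / of_nat (fact k * fact (n - k) * fact (n - 2 * k)) * t ^ (n - 2 * k)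
          = of_int ((-1)^k) * of_nat ((n choose k) * ((2*n - 2*k) choose n)) * t^(n-2*k)"
        by (simp only: times_divide_eq_right[symmetric] fr)
    qed
    have eq: "legendreP n t = inverse 2 ^ n * (\<Sum>k=0..n div 2. of_int ((-1)^k) * of_nat ((n choose k) * ((2*n - 2*k) choose n)) * t^(n-2*k))"
      unfolding legendreP_def e1 e2 ..
    have "Rr p (inverse 2 ^ n * (\<Sum>k=0..n div 2. of_int ((-1)^k) * of_nat ((n choose k) * ((2*n - 2*k) choose n)) * t^(n-2*k))) (h^n * Pint)"
      unfolding Pint_def by (intro Rr_mult[OF pp] Rr_pow[OF pp] Rr_sum[OF pp] Rr_int[OF pp] Rr_nat[OF pp] hi tR)
    thus ?thesis unfolding eq .
  qed
  define Rint where "Rint = Legendre (-c) p * (h^n * Pint)"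
  have RR: "Rr p (of_int (qLegendre (- x) p) * legendreP n t) Rint"
    unfolding Rint_def qL by (intro Rr_mult[OF pp] Rr_int[OF pp] PR)
  have nlam: "\<not> p dvd lam"
  proof
    assume d: "p dvd lam"
    have "Rr p (l * (-(2*x))) (lam * (-(2*c)))" by (intro Rr_mult[OF pp] Rr_uminus[OF pp] lR two xc)
    moreover have "l * (-(2*x)) = 1" unfolding l_def using x0 by (simp add: field_simps)
    ultimately have "[lam * (-(2*c)) = 1] (mod p)" using Rr_unique[OF pp _ one] by simp
    moreover have "p dvd lam * (-(2*c))" using d by simp
    ultimately have "p dvd 1" using cong_dvd_iff by blast
    thus False using pp by (simp add: not_prime_unit)
  qed
  have sumT: "(\<Sum>s\<in>{0..<p}. Legendre (s*((s+T)^2-1)) p) = Legendre lam p * S"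
  proof -
    have "(\<Sum>s\<in>{0..<p}. Legendre (s*((s+T)^2-1)) p) = (\<Sum>u\<in>{0..<p}. Legendre (((lam*u+0) mod p)*((((lam*u+0) mod p)+T)^2-1)) p)"
      by (rule reindex_affine[OF pp hn nlam])
    also have "\<dots> = (\<Sum>u\<in>{0..<p}. Legendre (lam*lam*(lam*Y u)) p)"
    proof (rule sum.cong[OF refl])
      fix u
      have hm: "[(lam*u+0) mod p = lam*u] (mod p)" by (simp add: cong_def)
      have c1: "[((lam*u+0) mod p)*((((lam*u+0) mod p)+T)^2-1) = (lam*u)*(((lam*u)+T)^2-1)] (mod p)"
        by (intro cong_mult cong_diff cong_add cong_pow cong_refl hm)
      have uR: "Rr p (of_int u) u" by (rule Rr_int[OF pp])
      have r1: "Rr p ((l*of_int u)*(((l*of_int u)+t)^2-1)) ((lam*u)*(((lam*u)+T)^2-1))"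
        by (intro Rr_mult[OF pp] Rr_diff[OF pp] Rr_pow[OF pp] Rr_add[OF pp] lR uR tR one)
      have r2: "Rr p (l*l*(l*(of_int u*((of_int u)^2-2*a*of_int u+a^2-4*b)))) (lam*lam*(lam*Y u))"
        unfolding Y_def by (intro Rr_mult[OF pp] Rr_diff[OF pp] Rr_add[OF pp] Rr_pow[OF pp] lR uR aR bR two four)
      have eqr: "(l*of_int u)*(((l*of_int u)+t)^2-1) = l*l*(l*(of_int u*((of_int u)^2-2*a*of_int u+a^2-4*b)))"
        unfolding l_def t_def a_def b_def using x0 by (simp add: field_simps power2_eq_square)
      have r2': "Rr p ((l*of_int u)*(((l*of_int u)+t)^2-1)) (lam*lam*(lam*Y u))" using r2 by (simp only: eqr)
      have c2: "[(lam*u)*(((lam*u)+T)^2-1) = lam*lam*(lam*Y u)] (mod p)" by (rule Rr_unique[OF pp r1 r2'])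
      show "Legendre (((lam*u+0) mod p)*((((lam*u+0) mod p)+T)^2-1)) p = Legendre (lam*lam*(lam*Y u)) p"
        using c1 c2 cong_trans Lc by blast
    qed
    also have "\<dots> = (\<Sum>u\<in>{0..<p}. Legendre lam p * Legendre (Y u) p)"
      using Legendre_sq[OF pp hn nlam] Legendre_mult[OF pp hn, of lam] by (simp only: mult.assoc)
    finally show ?thesis unfolding S_def by (simp add: sum_distrib_left)
  qed
  have P1: "[Pint = - (Legendre lam p * S)] (mod p)"
  proof -
    have "[Pint = - (\<Sum>s\<in>{0..<p}. (s*((s+T)^2-1))^n)] (mod p)" unfolding Pint_def by (rule Pint_extract[OF pp hn])
    moreover have "[- (\<Sum>s\<in>{0..<p}. (s*((s+T)^2-1))^n) = - (\<Sum>s\<in>{0..<p}. Legendre (s*((s+T)^2-1)) p)] (mod p)"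
      using sum_pow_legendre[OF pp hn] by (simp add: cong_minus_minus_iff)
    ultimately show ?thesis unfolding sumT by (rule cong_trans)
  qed
  have K: "[Legendre (-c) p * h^n * Legendre lam p = 1] (mod p)"
  proof -
    have "[Legendre (-c) p * h^n * Legendre lam p = (-c)^n * h^n * lam^n] (mod p)"
      using euler[OF pp hn] by (intro cong_mult cong_refl)
    moreover have "(-c)^n * h^n * lam^n = ((-c)*h*lam)^n" by (simp only: power_mult_distrib)
    moreover have "[(-c)*h*lam = q4] (mod p)"
    proof -
      have r: "Rr p ((-x)*inverse 2*l) ((-c)*h*lam)" by (intro Rr_mult[OF pp] Rr_uminus[OF pp] xc hi lR)
      have e: "(-x)*inverse 2*l = inverse 4" unfolding l_def using x0 by (simp add: field_simps)
      have "Rr p (inverse 4) ((-c)*h*lam)" using r by (simp only: e)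
      thus ?thesis by (rule Rr_unique[OF pp _ q4i])
    qed
    moreover have "[q4^n = 1] (mod p)"
    proof -
      have "[q4^n = (h*h)^n] (mod p)" using q4h by (rule cong_pow)
      moreover have "(h*h)^n = h^(2*n)" by (simp add: power_mult power2_eq_square)
      moreover have "\<not> p dvd h"
      proof
        assume "p dvd h" hence "p dvd 2*h" by simp
        hence "p dvd 1" using h cong_dvd_iff by blast
        thus False using pp by (simp add: not_prime_unit)
      qed
      hence "[h^(2*n) = 1] (mod p)" by (rule fermat2[OF pp hn])
      ultimately show ?thesis by (metis (no_types) cong_trans)
    qed
    ultimately show ?thesis by (metis (no_types) cong_trans cong_pow)
  qed
  have final: "[Lint = Rint] (mod p)"
  proof -
    have "[Rint = Legendre (-c) p * (h^n * (- (Legendre lam p * S)))] (mod p)"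
      unfolding Rint_def using P1 by (intro cong_mult cong_refl)
    moreover have "Legendre (-c) p * (h^n * (- (Legendre lam p * S))) = - ((Legendre (-c) p * h^n * Legendre lam p) * S)"
      by (simp add: algebra_simps)
    moreover have "[- ((Legendre (-c) p * h^n * Legendre lam p) * S) = - (1 * S)] (mod p)"
    proof -
      have "[(Legendre (-c) p * h^n * Legendre lam p) * S = 1 * S] (mod p)" using K by (rule cong_scalar_right)
      thus ?thesis by (simp only: cong_minus_minus_iff)
    qed
    ultimately have "[Rint = - S] (mod p)" by (metis (no_types) cong_trans mult_1)
    moreover have "[Lint = - S] (mod p)" using L1 L2 cong_trans by blast
    ultimately show ?thesis using cong_sym cong_trans by blast
  qed
  show ?thesis
    using qcong_intro[OF pp LR RR final] unfolding n_def t_def .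
qed


end
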